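(* (Metatheory of CPL natural deduction.) Fix a set $W$ of worlds with a converse well-founded accessibility relation $\prec$. For all contexts $\Gamma,\Gamma'$, worlds $w$, and propositions $A, C$: (i) (Hypothesis) If $A[w] \in \Gamma$, then $\Gamma \vdash_{\mathbf{CPL}} A[w]$. (ii) (Generalized weakening) If $\Gamma \subseteq_w \Gamma'$ and $\Gamma \vdash_{\mathbf{CPL}} A[w]$, then $\Gamma' \vdash_{\mathbf{CPL}} A[w]$. (iii) (Substitution) If $\Gamma \vdash_{\mathbf{CPL}} A[w]$ and $\Gamma, A[w] \vdash_{\mathbf{CPL}} C[w]$, then $\Gamma \vdash_{\mathbf{CPL}} C[w]$.
   Context: Fix a set $W$ of worlds and a binary accessibility relation $\prec$ on $W$ that is converse well-founded: there is no infinite chain $w_0 \prec w_1 \prec w_2 \prec \cdots$ (in particular $\prec$ is irreflexive and has no cycles). $\prec^*$ denotes the reflexive–transitive closure and $\prec^+$ the transitive closure of $\prec$. Propositions are generated by $A,B,C ::= Q \mid \bot \mid A \supset B \mid \Diamond A \mid \Box A$, where $Q$ ranges over atomic propositions. A context $\Gamma$ is a finite collection of judgments $A[w]$ with $A$ a proposition and $w \in W$; $\Gamma, A[w]$ denotes the context extended by $A[w]$. For contexts $\Gamma,\Gamma'$ and a world $w$, $\Gamma \subseteq_w \Gamma'$ holds iff (a) for all $w'$ with $w \prec^* w'$, $A[w'] \in \Gamma$ implies $A[w'] \in \Gamma'$, and (b) for all $w'$ with $w \prec^+ w'$, $A[w'] \in \Gamma'$ implies $A[w'] \in \Gamma$.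 The judgment $\Gamma \vdash_{\mathbf{CPL}} A[w]$ (natural deduction for tethered constructive provability logic) is defined one world at a time: provability at $w$ is defined after provability at all $w'$ with $w \prec^+ w'$ (well-defined by converse well-foundedness), and at each world it is the least relation closed under the rules below, whose premises may be meta-level universal quantifications and implications: (hyp) $\Gamma, A[w] \vdash A[w]$. ($\bot E$) If $\Gamma \vdash \bot[w]$ then $\Gamma \vdash C[w]$. ($\supset I$) If $\Gamma, A[w] \vdash B[w]$ then $\Gamma \vdash A \supset B[w]$. ($\supset E$) If $\Gamma \vdash A \supset B[w]$ and $\Gamma \vdash A[w]$ then $\Gamma \vdash B[w]$. ($\Diamond I$) If $w \prec w'$ and $\Gamma \vdash A[w']$ then $\Gamma \vdash \Diamond A[w]$. ($\Box I$) If for every $w'$ with $w \prec w'$ we have $\Gamma \vdash A[w']$, then $\Gamma \vdash \Box A[w]$. ($\Diamond E$) If $\Gamma \vdash \Diamond A[w]$ and for every $w'$ with $w \prec w'$, $\Gamma \vdash A[w']$ implies $\Gamma \vdash C[w]$, then $\Gamma \vdash C[w]$. ($\Box E$) If $\Gamma \vdash \Box A[w]$ and ($\Gamma \vdash A[w']$ for all $w'$ with $w \prec w'$) implies $\Gamma \vdash C[w]$, then $\Gamma \vdash C[w]$. *)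

theory Defs
  imports Main
begin

datatype 'a fm = Atom 'a | Bot | Imp "'a fm" "'a fm" | Dia "'a fm" | Box "'a fm"

text \<open>A context is a (finite) collection of judgments A[w], represented as a set of pairs.
  The extension \<Gamma>, A[w] is insert (A,w) \<Gamma>.\<close>
type_synonym ('a,'w) ctx = "('a fm \<times> 'w) set"

text \<open>Rules at a single world w, relative to provability U at other worlds
  (U w' \<Gamma> A means \<Gamma> \<turnstile> A[w']); only used for w' with w \<prec> w'.\<close>
inductive cpl_at :: "('w \<Rightarrow> 'w \<Rightarrow> bool) \<Rightarrow> ('w \<Rightarrow> ('a,'w) ctx \<Rightarrow> 'a fm \<Rightarrow> bool) \<Rightarrow> 'w
    \<Rightarrow> ('a,'w) ctx \<Rightarrow> 'a fm \<Rightarrow> bool"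
  for R :: "'w \<Rightarrow> 'w \<Rightarrow> bool" and U and w where
  hyp: "cpl_at R U w (insert (A, w) \<Gamma>) A"
| botE: "cpl_at R U w \<Gamma> Bot \<Longrightarrow> cpl_at R U w \<Gamma> C"
| impI: "cpl_at R U w (insert (A, w) \<Gamma>) B \<Longrightarrow> cpl_at R U w \<Gamma> (Imp A B)"
| impE: "cpl_at R U w \<Gamma> (Imp A B) \<Longrightarrow> cpl_at R U w \<Gamma> A \<Longrightarrow> cpl_at R U w \<Gamma> B"
| diaI: "R w w' \<Longrightarrow> U w' \<Gamma> A \<Longrightarrow> cpl_at R U w \<Gamma> (Dia A)"
| boxI: "(\<forall>w'. R w w' \<longrightarrow> U w' \<Gamma> A) \<Longrightarrow> cpl_at R U w \<Gamma> (Box A)"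
| diaE: "cpl_at R U w \<Gamma> (Dia A) \<Longrightarrow>
         (\<forall>w'. R w w' \<longrightarrow> U w' \<Gamma> A \<longrightarrow> cpl_at R U w \<Gamma> C) \<Longrightarrow> cpl_at R U w \<Gamma> C"
| boxE: "cpl_at R U w \<Gamma> (Box A) \<Longrightarrow>
         ((\<forall>w'. R w w' \<longrightarrow> U w' \<Gamma> A) \<longrightarrow> cpl_at R U w \<Gamma> C) \<Longrightarrow> cpl_at R U w \<Gamma> C"

text \<open>Provability defined world by world, by well-founded recursion along the converse of R
  (meaningful when R is converse well-founded).\<close>
definition cpl :: "('w \<Rightarrow> 'w \<Rightarrow> bool) \<Rightarrow> ('a,'w) ctx \<Rightarrow> 'a fm \<Rightarrow> 'w \<Rightarrow> bool" where
  "cpl R \<Gamma> A w = wfrec {(x, y). R y x} (\<lambda>f v. cpl_at R f v) w \<Gamma> A"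

definition ctx_sub :: "('w \<Rightarrow> 'w \<Rightarrow> bool) \<Rightarrow> 'w \<Rightarrow> ('a,'w) ctx \<Rightarrow> ('a,'w) ctx \<Rightarrow> bool" where
  "ctx_sub R w \<Gamma> \<Gamma>' \<longleftrightarrow>
     (\<forall>w' A. R\<^sup>*\<^sup>* w w' \<longrightarrow> (A, w') \<in> \<Gamma> \<longrightarrow> (A, w') \<in> \<Gamma>') \<and>
     (\<forall>w' A. R\<^sup>+\<^sup>+ w w' \<longrightarrow> (A, w') \<in> \<Gamma>' \<longrightarrow> (A, w') \<in> \<Gamma>)"

end

theory Submission
  imports Defs
begin

lemma cpl_at_cong:
  assumes "cpl_at R U w \<Gamma> A" "\<forall>v. R w v \<longrightarrow> U v = U' v"
  shows "cpl_at R U' w \<Gamma> A"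
  using assms
proof (induction rule: cpl_at.induct)
  case (hyp A \<Gamma>) show ?case by (rule cpl_at.hyp)
next
  case (botE \<Gamma> C) then show ?case by (blast intro: cpl_at.botE)
next
  case (impI A \<Gamma> B) then show ?case by (blast intro: cpl_at.impI)
next
  case (impE \<Gamma> A B) then show ?case by (blast intro: cpl_at.impE)
next
  case (diaI w' \<Gamma> A) then show ?case by (metis cpl_at.diaI)
next
  case (boxI \<Gamma> A) then show ?case by (metis cpl_at.boxI)
next
  case (diaE \<Gamma> A C) then show ?case by (metis cpl_at.diaE)
next
  case (boxE \<Gamma> A C) then show ?case by (metis cpl_at.boxE)
qed

lemma cpl_unfold:
  assumes wf: "wf {(x, y). R y x}"
  shows "cpl R \<Gamma> A w = cpl_at R (\<lambda>v \<Gamma> A. cpl R \<Gamma> A v) w \<Gamma> A"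
proof -
  let ?r = "{(x, y). R y x}"
  let ?F = "\<lambda>f v. cpl_at R f v"
  have e: "cpl R \<Gamma> A w = cpl_at R (cut (wfrec ?r ?F) ?r w) w \<Gamma> A"
    unfolding cpl_def by (subst wfrec[OF wf]) simp
  have c: "\<forall>v. R w v \<longrightarrow> cut (wfrec ?r ?F) ?r w v = (\<lambda>\<Gamma> A. cpl R \<Gamma> A v)"
    by (auto simp: cut_apply cpl_def)
  have c': "\<forall>v. R w v \<longrightarrow> (\<lambda>\<Gamma> A. cpl R \<Gamma> A v) = cut (wfrec ?r ?F) ?r w v"
    by (auto simp: cut_apply cpl_def)
  show ?thesis
  proof
    assume "cpl R \<Gamma> A w"
    then show "cpl_at R (\<lambda>v \<Gamma> A. cpl R \<Gamma> A v) w \<Gamma> A"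
      using e c by (blast intro: cpl_at_cong)
  next
    assume "cpl_at R (\<lambda>v \<Gamma> A. cpl R \<Gamma> A v) w \<Gamma> A"
    then show "cpl R \<Gamma> A w"
      using e c' by (blast intro: cpl_at_cong)
  qed
qed

lemma tr_irrefl:
  assumes wf: "wf {(x, y). R y x}"
  shows "\<not> R\<^sup>+\<^sup>+ w w"
proof
  assume "R\<^sup>+\<^sup>+ w w"
  have "\<And>a b. R\<^sup>+\<^sup>+ a b \<Longrightarrow> (b, a) \<in> {(x, y). R y x}\<^sup>+"
  proof -
    fix a b assume "R\<^sup>+\<^sup>+ a b" then show "(b, a) \<in> {(x, y). R y x}\<^sup>+"
      by induction (auto intro: trancl_into_trancl2)
  qed
  from this[OF \<open>R\<^sup>+\<^sup>+ w w\<close>] wf_acyclic[OF wf] show False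
    by (auto simp: acyclic_def)
qed

lemma sub_succ:
  assumes "ctx_sub R w \<Gamma> \<Gamma>'" "R w w'"
  shows "ctx_sub R w' \<Gamma> \<Gamma>'" "ctx_sub R w' \<Gamma>' \<Gamma>"
  using assms unfolding ctx_sub_def
  by (meson converse_rtranclp_into_rtranclp tranclp_into_tranclp2 tranclp_into_rtranclp
        rtranclp_into_tranclp2)+

lemma weaken:
  assumes wf: "wf {(x, y). R y x}"
  shows "\<forall>(\<Gamma>::('a,'w) ctx) \<Gamma>' A. ctx_sub R w \<Gamma> \<Gamma>' \<longrightarrow> cpl R \<Gamma> A w \<longrightarrow> cpl R \<Gamma>' A w"
  using wf
proof (induction w rule: wf_induct_rule)
  case (less w)
  let ?U = "\<lambda>v (\<Gamma>::('a,'w) ctx) A. cpl R \<Gamma> A v"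
  have IH: "\<And>w' (\<Gamma>::('a,'w) ctx) \<Gamma>' A. R w w' \<Longrightarrow> ctx_sub R w' \<Gamma> \<Gamma>' \<Longrightarrow> cpl R \<Gamma> A w' \<Longrightarrow> cpl R \<Gamma>' A w'"
    using less by blast
  have main: "cpl_at R ?U w \<Gamma> A \<Longrightarrow> ctx_sub R w \<Gamma> \<Gamma>' \<Longrightarrow> cpl_at R ?U w \<Gamma>' A" for \<Gamma> \<Gamma>' :: "('a,'w) ctx" and A
  proof (induction arbitrary: \<Gamma>' rule: cpl_at.induct)
    case (hyp A \<Gamma>)
    then have "(A, w) \<in> \<Gamma>'" unfolding ctx_sub_def by blast
    then have "\<Gamma>' = insert (A, w) \<Gamma>'" by blast
    then show ?case by (metis cpl_at.hyp)
  next
    case (botE \<Gamma> C) then show ?case by (blast intro: cpl_at.botE)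
  next
    case (impI A \<Gamma> B)
    have "ctx_sub R w (insert (A, w) \<Gamma>) (insert (A, w) \<Gamma>')"
      using impI.prems unfolding ctx_sub_def by auto
    then show ?case using impI by (blast intro: cpl_at.impI)
  next
    case (impE \<Gamma> A B) then show ?case by (blast intro: cpl_at.impE)
  next
    case (diaI w' \<Gamma> A)
    have "cpl R \<Gamma>' A w'"
      using IH[OF diaI.hyps(1) sub_succ(1)[OF diaI.prems diaI.hyps(1)] diaI.hyps(2)] .
    then show ?case by (rule cpl_at.diaI[where R=R and w=w and U="?U", OF diaI.hyps(1)])
  next
    case (boxI \<Gamma> A)
    have "\<forall>w'. R w w' \<longrightarrow> cpl R \<Gamma>' A w'"
      using IH sub_succ(1)[OF boxI.prems] boxI.hyps by blast
    then show ?case by (intro cpl_at.boxI) simp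
  next
    case (diaE \<Gamma> A C)
    have X: "cpl_at R ?U w \<Gamma>' C" if r: "R w w'" and u: "cpl R \<Gamma>' A w'" for w'
    proof -
      have "cpl R \<Gamma> A w'" using IH[OF r sub_succ(2)[OF diaE.prems r]] u by blast
      then show ?thesis using diaE.IH diaE.prems r by blast
    qed
    have D: "cpl_at R ?U w \<Gamma>' (Dia A)" using diaE by blast
    show ?case using cpl_at.diaE[OF D] X by blast
  next
    case (boxE \<Gamma> A C)
    have B: "cpl_at R ?U w \<Gamma>' (Box A)" using boxE by blast
    have X: "cpl_at R ?U w \<Gamma>' C" if u: "\<forall>w'. R w w' \<longrightarrow> cpl R \<Gamma>' A w'"
    proof -
      have "cpl R \<Gamma> A w'" if r: "R w w'" for w'
        using IH[OF r sub_succ(2)[OF boxE.prems r]] u r by blast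
      then show ?thesis using boxE.IH boxE.prems by blast
    qed
    show ?case using cpl_at.boxE[OF B] X by blast
  qed
  show ?case using main cpl_unfold[OF wf] by blast
qed

lemma sub_ins1: "\<not> R\<^sup>*\<^sup>* w' w \<Longrightarrow> ctx_sub R w' (insert (A, w) \<Gamma>) \<Gamma>"
  unfolding ctx_sub_def by (blast dest: tranclp_into_rtranclp)

lemma sub_ins2: "\<not> R\<^sup>+\<^sup>+ w' w \<Longrightarrow> ctx_sub R w' \<Gamma> (insert (A, w) \<Gamma>)"
  unfolding ctx_sub_def by blast

lemma subst_lemma:
  assumes wf: "wf {(x, y). R y x}"
  shows "cpl R (\<Gamma>::('a,'w) ctx) A w \<Longrightarrow> cpl R (insert (A, w) \<Gamma>) C w \<Longrightarrow> cpl R \<Gamma> C w"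
proof -
  let ?U = "\<lambda>v (\<Gamma>::('a,'w) ctx) A. cpl R \<Gamma> A v"
  have W: "\<And>w (\<Gamma>::('a,'w) ctx) \<Gamma>' A. ctx_sub R w \<Gamma> \<Gamma>' \<Longrightarrow> cpl R \<Gamma> A w \<Longrightarrow> cpl R \<Gamma>' A w"
    using weaken[OF wf] by blast
  have irr: "\<And>w'. R w w' \<Longrightarrow> R\<^sup>*\<^sup>* w' w \<Longrightarrow> False"
    using tr_irrefl[OF wf] by (meson rtranclp_into_tranclp2)
  have irr2: "\<And>w'. R w w' \<Longrightarrow> R\<^sup>+\<^sup>+ w' w \<Longrightarrow> False"
    by (rule irr, assumption, erule tranclp_into_rtranclp)
  have main: "cpl_at R ?U w \<Delta> C \<Longrightarrow> \<Delta> = insert (A, w) \<Gamma> \<Longrightarrow> cpl R \<Gamma> A w \<Longrightarrow> cpl_at R ?U w \<Gamma> C"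
    for \<Delta> \<Gamma> :: "('a,'w) ctx" and A C
  proof (induction arbitrary: \<Gamma> A rule: cpl_at.induct)
    case (hyp B \<Gamma>0)
    show ?case
    proof (cases "B = A")
      case True
      then have "cpl R \<Gamma> B w" using hyp.prems(2) by simp
      then show ?thesis by (rule cpl_unfold[OF wf, THEN iffD1])
    next
      case False
      then have "(B, w) \<in> \<Gamma>" using hyp by blast
      then have e: "insert (B, w) \<Gamma> = \<Gamma>" by blast
      show ?thesis using cpl_at.hyp[where R=R and U="?U" and w=w and A=B and \<Gamma>=\<Gamma>] unfolding e .
    qed
  next
    case (botE \<Gamma>0 C) then show ?case by (blast intro: cpl_at.botE)
  next
    case (impI B \<Gamma>0 D)
    have "ctx_sub R w \<Gamma> (insert (B, w) \<Gamma>)"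
      using tr_irrefl[OF wf] sub_ins2 by metis
    then have "cpl R (insert (B, w) \<Gamma>) A w" using W impI.prems(2) by blast
    moreover have "insert (B, w) \<Gamma>0 = insert (A, w) (insert (B, w) \<Gamma>)"
      using impI.prems by blast
    ultimately show ?case using impI.IH by (blast intro: cpl_at.impI)
  next
    case (impE \<Gamma>0 B D) then show ?case by (blast intro: cpl_at.impE)
  next
    case (diaI w' \<Gamma>0 B)
    have "ctx_sub R w' \<Gamma>0 \<Gamma>"
      using diaI.prems(1) irr[OF diaI.hyps(1)] sub_ins1 by metis
    then have "cpl R \<Gamma> B w'" using W diaI.hyps(2) by blast
    then show ?case by (rule cpl_at.diaI[where R=R and w=w and U="?U", OF diaI.hyps(1)])
  next
    case (boxI \<Gamma>0 B)
    have "ctx_sub R w' \<Gamma>0 \<Gamma>" if "R w w'" for w'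
      using boxI.prems(1) irr[OF that] sub_ins1 by metis
    then have "\<forall>w'. R w w' \<longrightarrow> cpl R \<Gamma> B w'" using boxI.hyps W by blast
    then show ?case by (intro cpl_at.boxI) simp
  next
    case (diaE \<Gamma>0 B D)
    have s: "ctx_sub R w' \<Gamma> \<Gamma>0" if "R w w'" for w'
      using diaE.prems(1) irr2[OF that] sub_ins2 by metis
    have Dg: "cpl_at R ?U w \<Gamma> (Dia B)" using diaE.IH(1)[OF diaE.prems] .
    have X: "cpl_at R ?U w \<Gamma> D" if r: "R w w'" and u: "cpl R \<Gamma> B w'" for w'
    proof -
      have "cpl R \<Gamma>0 B w'" using W[OF s[OF r] u] .
      then show ?thesis using diaE.IH diaE.prems r by blast
    qed
    show ?case using cpl_at.diaE[OF Dg] X by blast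
  next
    case (boxE \<Gamma>0 B D)
    have s: "ctx_sub R w' \<Gamma> \<Gamma>0" if "R w w'" for w'
      using boxE.prems(1) irr2[OF that] sub_ins2 by metis
    have Bg: "cpl_at R ?U w \<Gamma> (Box B)" using boxE.IH(1)[OF boxE.prems] .
    have X: "cpl_at R ?U w \<Gamma> D" if u: "\<forall>w'. R w w' \<longrightarrow> cpl R \<Gamma> B w'"
    proof -
      have "cpl R \<Gamma>0 B w'" if r: "R w w'" for w'
        using W[OF s[OF r]] u r by blast
      then have "\<forall>w'. R w w' \<longrightarrow> cpl R \<Gamma>0 B w'" by blast
      then have "(\<forall>w'. R w w' \<longrightarrow> ?U w' \<Gamma>0 B)" by simp
      then have "\<forall>\<Gamma>' A'. \<Gamma>0 = insert (A', w) \<Gamma>' \<longrightarrow> cpl R \<Gamma>' A' w \<longrightarrow> cpl_at R ?U w \<Gamma>' D"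
        using boxE.IH(2) by blast
      then show ?thesis using boxE.prems by blast
    qed
    from X have "(\<forall>w'. R w w' \<longrightarrow> ?U w' \<Gamma> B) \<longrightarrow> cpl_at R ?U w \<Gamma> D" by simp
    then show ?case by (rule cpl_at.boxE[OF Bg])
  qed
  assume a1: "cpl R \<Gamma> A w" and a2: "cpl R (insert (A, w) \<Gamma>) C w"
  have "cpl_at R ?U w (insert (A, w) \<Gamma>) C" using a2 by (rule cpl_unfold[OF wf, THEN iffD1])
  then have "cpl_at R ?U w \<Gamma> C" using main[OF _ refl a1] by blast
  then show "cpl R \<Gamma> C w" by (rule cpl_unfold[OF wf, THEN iffD2])
qed

theorem theorem1:
  fixes R :: "'w \<Rightarrow> 'w \<Rightarrow> bool"
  assumes "wf {(x, y). R y x}"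
  shows "(\<forall>(\<Gamma> :: ('a,'w) ctx) A w. finite \<Gamma> \<longrightarrow> (A, w) \<in> \<Gamma> \<longrightarrow> cpl R \<Gamma> A w)
       \<and> (\<forall>(\<Gamma> :: ('a,'w) ctx) \<Gamma>' A w. finite \<Gamma> \<longrightarrow> finite \<Gamma>' \<longrightarrow> ctx_sub R w \<Gamma> \<Gamma>' \<longrightarrow>
              cpl R \<Gamma> A w \<longrightarrow> cpl R \<Gamma>' A w)
       \<and> (\<forall>(\<Gamma> :: ('a,'w) ctx) A C w. finite \<Gamma> \<longrightarrow> cpl R \<Gamma> A w \<longrightarrow>
              cpl R (insert (A, w) \<Gamma>) C w \<longrightarrow> cpl R \<Gamma> C w)"
proof (intro conjI allI HOL.impI)
  fix \<Gamma> :: "('a,'w) ctx" and A w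
  assume "finite \<Gamma>" "(A, w) \<in> \<Gamma>"
  then have e: "insert (A, w) \<Gamma> = \<Gamma>" by blast
  have "cpl_at R (\<lambda>v (\<Gamma>::('a,'w) ctx) A. cpl R \<Gamma> A v) w (insert (A, w) \<Gamma>) A"
    by (rule cpl_at.hyp)
  then have "cpl_at R (\<lambda>v (\<Gamma>::('a,'w) ctx) A. cpl R \<Gamma> A v) w \<Gamma> A" unfolding e .
  then show "cpl R \<Gamma> A w" by (rule cpl_unfold[OF assms, THEN iffD2])
next
  fix \<Gamma> \<Gamma>' :: "('a,'w) ctx" and A w
  assume "finite \<Gamma>" "finite \<Gamma>'" "ctx_sub R w \<Gamma> \<Gamma>'" "cpl R \<Gamma> A w"
  then show "cpl R \<Gamma>' A w" using weaken[OF assms] by blast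
next
  fix \<Gamma> :: "('a,'w) ctx" and A C w
  assume "finite \<Gamma>" "cpl R \<Gamma> A w" "cpl R (insert (A, w) \<Gamma>) C w"
  then show "cpl R \<Gamma> C w" using subst_lemma[OF assms] by blast
qed

end
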